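(* Let $(\Lambda,d)$ be a $k$-graph and let $p\in\mathbb{N}^k$ with $p_i\ge1$ for $1\le i\le k$. Then the coordinate matrices $M^{p\Lambda}_1,\dots,M^{p\Lambda}_k$ of the dual $k$-graph $p\Lambda$ have all entries in $\{0,1\}$.
   Context: A $k$-graph is a pair $(\Lambda,d)$ where $\Lambda$ is a countable category and $d:\Lambda\to\mathbb{N}^k$ is a functor satisfying the factorisation property: if $d(\lambda)=m+n$ then there are unique $\mu\in d^{-1}(m)$, $\nu\in d^{-1}(n)$ with $\lambda=\mu\nu$. Vertices are identified with paths of degree $0$; $r,s$ are codomain and domain; $\Lambda^n:=d^{-1}(n)$; $e_1,\dots,e_k$ are the standard generators of $\mathbb{N}^k$. The coordinate matrices of a $k$-graph $\Gamma$ are the matrices $M^\Gamma_i$ ($1\le i\le k$) indexed by $\Gamma^0\times\Gamma^0$ with $(M^\Gamma_i)_{v,w}:=|\{\lambda\in\Gamma^{e_i}: r(\lambda)=w,\ s(\lambda)=v\}|$. For $d(\lambda)=n$ and $l\le m\le n$, $\lambda(l,m)$ is the unique path of degree $m-l$ with $\lambda=\lambda(0,l)\lambda(l,m)\lambda(m,n)$. The dual $k$-graph $p\Lambda$ has paths $\{\lambda:d(\lambda)\ge p\}$, vertices $\Lambda^p$, range $r_p(\lambda)=\lambda(0,p)$, source $s_p(\lambda)=\lambda(d(\lambda)-p,d(\lambda))$, composition $\lambda\circ_p\mu=\lambda\,\mu(p,d(\mu))$ when $s_p(\lambda)=r_p(\mu)$, degree $d_p(\lambda)=d(\lambda)-p$.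 *)

theory Defs
  imports Main "HOL-Library.Countable_Set" "HOL-Library.Extended_Nat"
begin

text \<open>Degrees in N^k are modelled as functions nat => nat supported on {0..<k}
  (coordinate j < k corresponds to the paper's coordinate j+1).  Addition and
  the partial order are pointwise.\<close>

definition in_Nk :: "nat \<Rightarrow> (nat \<Rightarrow> nat) \<Rightarrow> bool" where
  "in_Nk k m \<longleftrightarrow> (\<forall>j\<ge>k. m j = 0)"

definition deg_add :: "(nat \<Rightarrow> nat) \<Rightarrow> (nat \<Rightarrow> nat) \<Rightarrow> nat \<Rightarrow> nat" where
  "deg_add m n = (\<lambda>j. m j + n j)"

definition deg_sub :: "(nat \<Rightarrow> nat) \<Rightarrow> (nat \<Rightarrow> nat) \<Rightarrow> nat \<Rightarrow> nat" where
  "deg_sub m n = (\<lambda>j. m j - n j)"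

definition deg_zero :: "nat \<Rightarrow> nat" where
  "deg_zero = (\<lambda>j. 0)"

definition unit_deg :: "nat \<Rightarrow> nat \<Rightarrow> nat" where
  "unit_deg i = (\<lambda>j. if j = i then 1 else 0)"

text \<open>A k-graph: a countable category whose morphisms form the set L; objects are
  identified with identity morphisms, r and s give range/codomain and source/domain
  (as identity morphisms), cmp l m is the composite l m (defined when s l = r m),
  and d is a functor to N^k with the (unique) factorisation property.\<close>
definition kgraph ::
  "nat \<Rightarrow> 'a set \<Rightarrow> ('a \<Rightarrow> 'a) \<Rightarrow> ('a \<Rightarrow> 'a) \<Rightarrow> ('a \<Rightarrow> 'a \<Rightarrow> 'a) \<Rightarrow> ('a \<Rightarrow> nat \<Rightarrow> nat) \<Rightarrow> bool"
where
  "kgraph k L r s cmp d \<longleftrightarrow>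
     countable L \<and>
     \<comment> \<open>category structure\<close>
     (\<forall>l\<in>L. r l \<in> L \<and> s l \<in> L) \<and>
     (\<forall>l\<in>L. r (r l) = r l \<and> s (r l) = r l \<and> r (s l) = s l \<and> s (s l) = s l) \<and>
     (\<forall>l\<in>L. cmp (r l) l = l \<and> cmp l (s l) = l) \<and>
     (\<forall>l\<in>L. \<forall>m\<in>L. s l = r m \<longrightarrow>
         cmp l m \<in> L \<and> r (cmp l m) = r l \<and> s (cmp l m) = s m) \<and>
     (\<forall>l\<in>L. \<forall>m\<in>L. \<forall>n\<in>L. s l = r m \<longrightarrow> s m = r n \<longrightarrow>
         cmp (cmp l m) n = cmp l (cmp m n)) \<and>
     \<comment> \<open>degree functor into N^k\<close>
     (\<forall>l\<in>L. in_Nk k (d l)) \<and>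
     (\<forall>l\<in>L. \<forall>m\<in>L. s l = r m \<longrightarrow> d (cmp l m) = deg_add (d l) (d m)) \<and>
     \<comment> \<open>factorisation property\<close>
     (\<forall>l\<in>L. \<forall>m n. d l = deg_add m n \<longrightarrow>
         (\<exists>!(a, b). a \<in> L \<and> b \<in> L \<and> d a = m \<and> d b = n \<and> s a = r b \<and> l = cmp a b))"

text \<open>The segment lambda(l,m), for l <= m <= d(lambda): the unique path of degree m - l with
  lambda = lambda(0,l) lambda(l,m) lambda(m,d(lambda)).\<close>
definition seg ::
  "'a set \<Rightarrow> ('a \<Rightarrow> 'a) \<Rightarrow> ('a \<Rightarrow> 'a) \<Rightarrow> ('a \<Rightarrow> 'a \<Rightarrow> 'a) \<Rightarrow> ('a \<Rightarrow> nat \<Rightarrow> nat)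
     \<Rightarrow> 'a \<Rightarrow> (nat \<Rightarrow> nat) \<Rightarrow> (nat \<Rightarrow> nat) \<Rightarrow> 'a"
where
  "seg L r s cmp d lam l m = (THE b. \<exists>a c. a \<in> L \<and> b \<in> L \<and> c \<in> L \<and>
      d a = l \<and> d b = deg_sub m l \<and> d c = deg_sub (d lam) m \<and>
      s a = r b \<and> s b = r c \<and> lam = cmp (cmp a b) c)"

definition coord_matrix ::
  "'a set \<Rightarrow> ('a \<Rightarrow> 'a) \<Rightarrow> ('a \<Rightarrow> 'a) \<Rightarrow> ('a \<Rightarrow> nat \<Rightarrow> nat) \<Rightarrow> nat \<Rightarrow> 'a \<Rightarrow> 'a \<Rightarrow> enat"
where
  "coord_matrix G r s d i v w =
     (let S = {l \<in> G. d l = unit_deg i \<and> r l = w \<and> s l = v}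
      in if finite S then enat (card S) else \<infinity>)"

definition kverts :: "'a set \<Rightarrow> ('a \<Rightarrow> nat \<Rightarrow> nat) \<Rightarrow> 'a set" where
  "kverts G d = {l \<in> G. d l = deg_zero}"

definition dual_paths :: "'a set \<Rightarrow> ('a \<Rightarrow> nat \<Rightarrow> nat) \<Rightarrow> (nat \<Rightarrow> nat) \<Rightarrow> 'a set" where
  "dual_paths L d p = {l \<in> L. p \<le> d l}"

definition dual_r ::
  "'a set \<Rightarrow> ('a \<Rightarrow> 'a) \<Rightarrow> ('a \<Rightarrow> 'a) \<Rightarrow> ('a \<Rightarrow> 'a \<Rightarrow> 'a) \<Rightarrow> ('a \<Rightarrow> nat \<Rightarrow> nat)
     \<Rightarrow> (nat \<Rightarrow> nat) \<Rightarrow> 'a \<Rightarrow> 'a" where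
  "dual_r L r s cmp d p lam = seg L r s cmp d lam deg_zero p"

definition dual_s ::
  "'a set \<Rightarrow> ('a \<Rightarrow> 'a) \<Rightarrow> ('a \<Rightarrow> 'a) \<Rightarrow> ('a \<Rightarrow> 'a \<Rightarrow> 'a) \<Rightarrow> ('a \<Rightarrow> nat \<Rightarrow> nat)
     \<Rightarrow> (nat \<Rightarrow> nat) \<Rightarrow> 'a \<Rightarrow> 'a" where
  "dual_s L r s cmp d p lam = seg L r s cmp d lam (deg_sub (d lam) p) (d lam)"

definition dual_comp ::
  "'a set \<Rightarrow> ('a \<Rightarrow> 'a) \<Rightarrow> ('a \<Rightarrow> 'a) \<Rightarrow> ('a \<Rightarrow> 'a \<Rightarrow> 'a) \<Rightarrow> ('a \<Rightarrow> nat \<Rightarrow> nat)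
     \<Rightarrow> (nat \<Rightarrow> nat) \<Rightarrow> 'a \<Rightarrow> 'a \<Rightarrow> 'a" where
  "dual_comp L r s cmp d p lam mu = cmp lam (seg L r s cmp d mu p (d mu))"

definition dual_d :: "('a \<Rightarrow> nat \<Rightarrow> nat) \<Rightarrow> (nat \<Rightarrow> nat) \<Rightarrow> 'a \<Rightarrow> nat \<Rightarrow> nat" where
  "dual_d d p lam = deg_sub (d lam) p"

end

theory Submission
  imports Defs
begin

lemma kg_basic:
  assumes "kgraph k L r s cmp d"
  shows "\<And>l. l \<in> L \<Longrightarrow> r l \<in> L \<and> s l \<in> L"
    and "\<And>l. l \<in> L \<Longrightarrow> r (r l) = r l \<and> s (r l) = r l \<and> r (s l) = s l \<and> s (s l) = s l"
    and "\<And>l. l \<in> L \<Longrightarrow> cmp (r l) l = l \<and> cmp l (s l) = l"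
    and "\<And>l m. l \<in> L \<Longrightarrow> m \<in> L \<Longrightarrow> s l = r m \<Longrightarrow>
         cmp l m \<in> L \<and> r (cmp l m) = r l \<and> s (cmp l m) = s m"
    and "\<And>l m n. l \<in> L \<Longrightarrow> m \<in> L \<Longrightarrow> n \<in> L \<Longrightarrow> s l = r m \<Longrightarrow> s m = r n \<Longrightarrow>
         cmp (cmp l m) n = cmp l (cmp m n)"
    and "\<And>l m. l \<in> L \<Longrightarrow> m \<in> L \<Longrightarrow> s l = r m \<Longrightarrow> d (cmp l m) = deg_add (d l) (d m)"
    and "\<And>l m n. l \<in> L \<Longrightarrow> d l = deg_add m n \<Longrightarrow>
         (\<exists>!(a, b). a \<in> L \<and> b \<in> L \<and> d a = m \<and> d b = n \<and> s a = r b \<and> l = cmp a b)"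
proof -
  note H = assms[unfolded kgraph_def]
  show "\<And>l. l \<in> L \<Longrightarrow> r l \<in> L \<and> s l \<in> L" using H by simp
  show "\<And>l. l \<in> L \<Longrightarrow> r (r l) = r l \<and> s (r l) = r l \<and> r (s l) = s l \<and> s (s l) = s l" using H by simp
  show "\<And>l. l \<in> L \<Longrightarrow> cmp (r l) l = l \<and> cmp l (s l) = l" using H by simp
  show "\<And>l m. l \<in> L \<Longrightarrow> m \<in> L \<Longrightarrow> s l = r m \<Longrightarrow>
         cmp l m \<in> L \<and> r (cmp l m) = r l \<and> s (cmp l m) = s m" using H by simp
  show "\<And>l m n. l \<in> L \<Longrightarrow> m \<in> L \<Longrightarrow> n \<in> L \<Longrightarrow> s l = r m \<Longrightarrow> s m = r n \<Longrightarrow>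
         cmp (cmp l m) n = cmp l (cmp m n)" using H by simp
  show "\<And>l m. l \<in> L \<Longrightarrow> m \<in> L \<Longrightarrow> s l = r m \<Longrightarrow> d (cmp l m) = deg_add (d l) (d m)" using H by simp
  show "\<And>l m n. l \<in> L \<Longrightarrow> d l = deg_add m n \<Longrightarrow>
         (\<exists>!(a, b). a \<in> L \<and> b \<in> L \<and> d a = m \<and> d b = n \<and> s a = r b \<and> l = cmp a b)"
  proof -
    have X: "\<forall>l\<in>L. \<forall>m n. d l = deg_add m n \<longrightarrow>
         (\<exists>!(a, b). a \<in> L \<and> b \<in> L \<and> d a = m \<and> d b = n \<and> s a = r b \<and> l = cmp a b)"
      using H by (elim conjE) assumption
    fix l m n assume "l \<in> L" "d l = deg_add m n"
    then show "(\<exists>!(a, b). a \<in> L \<and> b \<in> L \<and> d a = m \<and> d b = n \<and> s a = r b \<and> l = cmp a b)"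
      by (rule X[rule_format])
  qed
qed

lemma fact_ex:
  assumes "kgraph k L r s cmp d" "l \<in> L" "d l = deg_add m n"
  obtains a b where "a \<in> L" "b \<in> L" "d a = m" "d b = n" "s a = r b" "l = cmp a b"
  using kg_basic(7)[OF assms(1,2,3)] by blast

lemma ex1_uniq: "\<exists>!x. P x \<Longrightarrow> P y \<Longrightarrow> P y' \<Longrightarrow> y = y'" by blast

lemma fact_uniq:
  assumes "kgraph k L r s cmp d" "l \<in> L" "d l = deg_add m n"
    and "a \<in> L" "b \<in> L" "d a = m" "d b = n" "s a = r b" "l = cmp a b"
    and "a' \<in> L" "b' \<in> L" "d a' = m" "d b' = n" "s a' = r b'" "l = cmp a' b'"
  shows "a = a' \<and> b = b'"
proof -
  have "\<exists>!(a, b). a \<in> L \<and> b \<in> L \<and> d a = m \<and> d b = n \<and> s a = r b \<and> l = cmp a b"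
    using kg_basic(7)[OF assms(1,2,3)] .
  from ex1_uniq[OF this, of "(a,b)" "(a',b')"] assms(4-15)
  have "(a,b) = (a',b')" by simp
  then show ?thesis by simp
qed

lemma d_ident:
  assumes "kgraph k L r s cmp d" "a \<in> L"
  shows "d (s a) = deg_zero" "d (r a) = deg_zero"
proof -
  have "d a = d (cmp a (s a))" using kg_basic(3)[OF assms] by simp
  also have "\<dots> = deg_add (d a) (d (s a))"
    using kg_basic(6)[OF assms(1) assms(2)] kg_basic(1,2)[OF assms] by simp
  finally show "d (s a) = deg_zero" unfolding deg_add_def deg_zero_def
    by (auto simp: fun_eq_iff dest: fun_cong)
  have "d a = d (cmp (r a) a)" using kg_basic(3)[OF assms] by simp
  also have "\<dots> = deg_add (d (r a)) (d a)"
    using kg_basic(6)[OF assms(1) _ assms(2)] kg_basic(1,2)[OF assms] by simp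
  finally show "d (r a) = deg_zero" unfolding deg_add_def deg_zero_def
    by (auto simp: fun_eq_iff dest: fun_cong)
qed

lemma zero_ident:
  assumes "kgraph k L r s cmp d" "a \<in> L" "d a = deg_zero"
  shows "a = r a" "a = s a"
proof -
  have dz: "d a = deg_add deg_zero deg_zero" using assms(3) by (simp add: deg_add_def deg_zero_def)
  have "a = r a \<and> s a = a"
    apply (rule fact_uniq[OF assms(1,2) dz])
    using kg_basic[OF assms(1)] d_ident[OF assms(1,2)] assms(2,3) by auto
  then show "a = r a" "a = s a" by auto
qed

lemma seg_prop:
  assumes kg: "kgraph k L r s cmp d" and lam: "lam \<in> L" and lm: "l \<le> m" and md: "m \<le> d lam"
  shows "\<exists>a c. a \<in> L \<and> seg L r s cmp d lam l m \<in> L \<and> c \<in> L \<and>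
      d a = l \<and> d (seg L r s cmp d lam l m) = deg_sub m l \<and> d c = deg_sub (d lam) m \<and>
      s a = r (seg L r s cmp d lam l m) \<and> s (seg L r s cmp d lam l m) = r c \<and>
      lam = cmp (cmp a (seg L r s cmp d lam l m)) c"
proof -
  let ?P = "\<lambda>b. \<exists>a c. a \<in> L \<and> b \<in> L \<and> c \<in> L \<and>
      d a = l \<and> d b = deg_sub m l \<and> d c = deg_sub (d lam) m \<and>
      s a = r b \<and> s b = r c \<and> lam = cmp (cmp a b) c"
  have e1: "d lam = deg_add m (deg_sub (d lam) m)" using md
    by (auto simp: deg_add_def deg_sub_def fun_eq_iff le_fun_def)
  have e2: "m = deg_add l (deg_sub m l)" using lm
    by (auto simp: deg_add_def deg_sub_def fun_eq_iff le_fun_def)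
  have ex: "\<exists>b. ?P b"
  proof -
    obtain x c where x: "x \<in> L" "c \<in> L" "d x = m" "d c = deg_sub (d lam) m" "s x = r c" "lam = cmp x c"
      using fact_ex[OF kg lam e1] by blast
    obtain a b where ab: "a \<in> L" "b \<in> L" "d a = l" "d b = deg_sub m l" "s a = r b" "x = cmp a b"
      using fact_ex[OF kg x(1)] x(3) e2 by metis
    have "s b = r c" using kg_basic(4)[OF kg ab(1,2,5)] ab(6) x(5) by simp
    then show ?thesis using ab x by blast
  qed
  have un: "b = b'" if P1: "?P b'" and P2: "?P b" for b b'
  proof -
    obtain a' c' where A: "a' \<in> L" "b' \<in> L" "c' \<in> L" "d a' = l" "d b' = deg_sub m l"
      "d c' = deg_sub (d lam) m" "s a' = r b'" "s b' = r c'" "lam = cmp (cmp a' b') c'" using P1 by blast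
    obtain a c where B: "a \<in> L" "b \<in> L" "c \<in> L" "d a = l" "d b = deg_sub m l"
      "d c = deg_sub (d lam) m" "s a = r b" "s b = r c" "lam = cmp (cmp a b) c" using P2 by blast
    have A1: "cmp a' b' \<in> L" "s (cmp a' b') = s b'" "d (cmp a' b') = m"
      using kg_basic(4,6)[OF kg A(1,2,7)] A e2 by auto
    have B1: "cmp a b \<in> L" "s (cmp a b) = s b" "d (cmp a b) = m"
      using kg_basic(4,6)[OF kg B(1,2,7)] B e2 by auto
    have "cmp a b = cmp a' b'"
      using fact_uniq[OF kg lam e1 B1(1) B(3) B1(3) B(6) _ B(9) A1(1) A(3) A1(3) A(6) _ A(9)]
        A1(2) B1(2) A(8) B(8) by auto
    then have "b = b'"
      using fact_uniq[OF kg B1(1) _ B(1,2,4,5,7) refl A(1,2,4,5,7)] B1(3) e2 by auto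
    then show "b = b'" .
  qed
  have "\<exists>!b. ?P b" using ex un by blast
  then have "?P (THE b. ?P b)" by (rule theI')
  then show ?thesis unfolding seg_def .
qed

lemma key:
  assumes kg: "kgraph k L r s cmp d" and pi: "1 \<le> p i"
    and lL: "l \<in> L" and pl: "p \<le> d l" and dl: "deg_sub (d l) p = unit_deg i"
    and u: "u \<in> L" and t: "t \<in> L" and du: "d u = unit_deg i" and dt: "d t = deg_sub p (unit_deg i)"
    and sut: "s u = r t" and wut: "dual_r L r s cmp d p l = cmp u t"
  shows "l = cmp u (dual_s L r s cmp d p l)"
proof -
  let ?w = "dual_r L r s cmp d p l" and ?v = "dual_s L r s cmp d p l"
  have dl2: "d l = deg_add p (unit_deg i)"
  proof (rule ext)
    fix j
    have "p j \<le> d l j" using pl by (simp add: le_fun_def)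
    moreover have "d l j - p j = unit_deg i j" using fun_cong[OF dl, of j] by (simp add: deg_sub_def)
    ultimately show "d l j = deg_add p (unit_deg i) j" by (simp add: deg_add_def)
  qed
  have z0: "deg_zero \<le> p" by (simp add: le_fun_def deg_zero_def)
  obtain a c where A: "a \<in> L" "?w \<in> L" "c \<in> L" "d a = deg_zero" "d ?w = deg_sub p deg_zero"
     "d c = deg_sub (d l) p" "s a = r ?w" "s ?w = r c" "l = cmp (cmp a ?w) c"
    using seg_prop[OF kg lL z0 pl] unfolding dual_r_def by blast
  have "a = s a" using zero_ident[OF kg A(1,4)] by simp
  then have "cmp a ?w = ?w" using A(7) kg_basic(3)[OF kg A(2)] by simp
  then have l1: "l = cmp ?w c" using A(9) by simp
  have le2: "deg_sub (d l) p \<le> d l" by (simp add: le_fun_def deg_sub_def)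
  obtain x y where B: "x \<in> L" "?v \<in> L" "y \<in> L" "d x = deg_sub (d l) p"
     "d ?v = deg_sub (d l) (deg_sub (d l) p)" "d y = deg_sub (d l) (d l)" "s x = r ?v" "s ?v = r y"
     "l = cmp (cmp x ?v) y"
    using seg_prop[OF kg lL le2 order_refl] unfolding dual_s_def by blast
  have dy: "d y = deg_zero" using B(6) by (simp add: deg_sub_def deg_zero_def)
  have "y = r y" using zero_ident[OF kg B(3) dy] by simp
  moreover have "cmp x ?v \<in> L" "s (cmp x ?v) = s ?v" using kg_basic(4)[OF kg B(1,2,7)] by auto
  ultimately have l2: "l = cmp x ?v" using B(8,9) kg_basic(3)[of k L r s cmp d "cmp x ?v"] kg by simp
  have dv: "d ?v = p" using B(5) pl by (auto simp: deg_sub_def le_fun_def fun_eq_iff)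
  have stc: "s t = r c" using kg_basic(4)[OF kg u t sut] wut A(8) by simp
  have l3: "l = cmp u (cmp t c)" using l1 wut kg_basic(5)[OF kg u t A(3) sut stc] by simp
  have tc: "cmp t c \<in> L" "r (cmp t c) = r t" using kg_basic(4)[OF kg t A(3) stc] by auto
  have dtc: "d (cmp t c) = p" using kg_basic(6)[OF kg t A(3) stc] dt A(6) dl pi
    by (auto simp: fun_eq_iff deg_add_def deg_sub_def unit_deg_def)
  have dl3: "d l = deg_add (unit_deg i) p" using dl2 by (auto simp: deg_add_def fun_eq_iff)
  have "x = u \<and> ?v = cmp t c"
    using fact_uniq[OF kg lL dl3 B(1,2) _ dv B(7) l2 u tc(1) du dtc _ l3] B(4) dl tc(2) sut by simp
  then show ?thesis using l2 by simp
qed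

theorem corollary3p9:
  fixes k :: nat and L :: "'a set" and r s :: "'a \<Rightarrow> 'a"
    and cmp :: "'a \<Rightarrow> 'a \<Rightarrow> 'a" and d :: "'a \<Rightarrow> nat \<Rightarrow> nat" and p :: "nat \<Rightarrow> nat"
  assumes "kgraph k L r s cmp d"
    and "in_Nk k p"
    and "\<forall>j<k. 1 \<le> p j"
    and "i < k"
    and "v \<in> kverts (dual_paths L d p) (dual_d d p)"
    and "w \<in> kverts (dual_paths L d p) (dual_d d p)"
  shows "coord_matrix (dual_paths L d p) (dual_r L r s cmp d p) (dual_s L r s cmp d p)
           (dual_d d p) i v w \<in> {0, 1}"
proof -
  note kg = assms(1)
  have pi: "1 \<le> p i" using assms(3,4) by simp
  let ?S = "{l \<in> dual_paths L d p. dual_d d p l = unit_deg i \<and> dual_r L r s cmp d p l = w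
            \<and> dual_s L r s cmp d p l = v}"
  have wL: "w \<in> L" "p \<le> d w" "deg_sub (d w) p = deg_zero"
    using assms(6) by (auto simp: kverts_def dual_paths_def dual_d_def)
  have dw: "d w = deg_add (unit_deg i) (deg_sub p (unit_deg i))"
  proof (rule ext)
    fix j
    have "p j \<le> d w j" using wL(2) by (simp add: le_fun_def)
    moreover have "d w j - p j = 0" using fun_cong[OF wL(3), of j] by (simp add: deg_sub_def deg_zero_def)
    moreover have "unit_deg i j \<le> p j" using pi by (simp add: unit_deg_def)
    ultimately show "d w j = deg_add (unit_deg i) (deg_sub p (unit_deg i)) j"
      by (simp add: deg_add_def deg_sub_def)
  qed
  obtain u t where ut: "u \<in> L" "t \<in> L" "d u = unit_deg i" "d t = deg_sub p (unit_deg i)"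
     "s u = r t" "w = cmp u t"
    using fact_ex[OF kg wL(1) dw] by blast
  have one: "l = cmp u v" if "l \<in> ?S" for l
  proof -
    have "l \<in> L" "p \<le> d l" "deg_sub (d l) p = unit_deg i" "dual_r L r s cmp d p l = w"
      "dual_s L r s cmp d p l = v"
      using that by (auto simp: dual_paths_def dual_d_def)
    then show ?thesis using key[OF kg pi _ _ _ ut(1-5)] ut(6) by metis
  qed
  have sub: "?S \<subseteq> {cmp u v}" using one by blast
  then have fin: "finite ?S" using finite_subset by blast
  have "card ?S \<le> 1" using card_mono[OF _ sub] by simp
  then have "card ?S = 0 \<or> card ?S = 1" by linarith
  then show ?thesis unfolding coord_matrix_def Let_def using fin
    by (auto simp: zero_enat_def one_enat_def)
qed

end
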